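(* Fix $n\ge1$, pairwise distinct constants $\lambda_1,\dots,\lambda_n$ and arbitrary constants $\alpha_1,\dots,\alpha_n$. Consider the system \[ y_{j,xx}=\frac{y_{j,x}^2-\alpha_j^2}{2y_j}+2(u-\lambda_j)y_j,\qquad (\mathrm{A}) \] \[ y_{j,t}=2u_xy_j-2(u+2\lambda_j)y_{j,x},\qquad (\mathrm{B}) \] $j=1,\dots,n$, where $u:=\frac{x}{6t}+\frac{1}{3t}(y_1+\dots+y_n)$ ($t\neq0$). Regard (A) as expressing $y_{j,xx}$ as a function of $x,t,y_1,y_{1,x},\dots,y_n,y_{n,x}$, and (B) as expressing $y_{j,t}$ in these variables, the $t$-derivative of $y_{j,x}$ being obtained by differentiating (B) with respect to $x$ and eliminating second $x$-derivatives by (A). Then the system is consistent: $(y_{j,xx})_t=(y_{j,t})_{xx}$ holds identically in $x,t,y_k,y_{k,x}$ when both sides are computed by virtue of (A), (B). Moreover, by virtue of (A), (B), the function $u$ satisfies the KdV equation $u_t=u_{xxx}-6uu_x$.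
   Context: All $y_j$ are assumed nonzero where the equations are considered. Subscripts $x,t$ denote partial derivatives. *)

theory Defs
  imports "HOL-Analysis.Analysis"
begin

text \<open>Jet space coordinates: a point is (x, t, y, p) where y k stands for y_k and
  p k stands for y_{k,x} (indices k = 1..n). Functions on the jet space are real-valued.\<close>

type_synonym jet = "real \<times> real \<times> (nat \<Rightarrow> real) \<times> (nat \<Rightarrow> real)"

definition pd_x :: "(jet \<Rightarrow> real) \<Rightarrow> jet \<Rightarrow> real" where
  "pd_x F J = (case J of (x, t, y, p) \<Rightarrow> deriv (\<lambda>s. F (s, t, y, p)) x)"

definition pd_t :: "(jet \<Rightarrow> real) \<Rightarrow> jet \<Rightarrow> real" where
  "pd_t F J = (case J of (x, t, y, p) \<Rightarrow> deriv (\<lambda>s. F (x, s, y, p)) t)"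

definition pd_y :: "nat \<Rightarrow> (jet \<Rightarrow> real) \<Rightarrow> jet \<Rightarrow> real" where
  "pd_y k F J = (case J of (x, t, y, p) \<Rightarrow> deriv (\<lambda>s. F (x, t, y(k := s), p)) (y k))"

definition pd_p :: "nat \<Rightarrow> (jet \<Rightarrow> real) \<Rightarrow> jet \<Rightarrow> real" where
  "pd_p k F J = (case J of (x, t, y, p) \<Rightarrow> deriv (\<lambda>s. F (x, t, y, p(k := s))) (p k))"

definition u_fun :: "nat \<Rightarrow> jet \<Rightarrow> real" where
  "u_fun n J = (case J of (x, t, y, p) \<Rightarrow> x / (6 * t) + (\<Sum>k = 1..n. y k) / (3 * t))"

definition ux_fun :: "nat \<Rightarrow> jet \<Rightarrow> real" where
  "ux_fun n J = (case J of (x, t, y, p) \<Rightarrow> 1 / (6 * t) + (\<Sum>k = 1..n. p k) / (3 * t))"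

definition rhsA :: "nat \<Rightarrow> (nat \<Rightarrow> real) \<Rightarrow> (nat \<Rightarrow> real) \<Rightarrow> nat \<Rightarrow> jet \<Rightarrow> real" where
  "rhsA n lam alpha j J = (case J of (x, t, y, p) \<Rightarrow>
      ((p j)^2 - (alpha j)^2) / (2 * y j) + 2 * (u_fun n J - lam j) * y j)"

definition rhsB :: "nat \<Rightarrow> (nat \<Rightarrow> real) \<Rightarrow> nat \<Rightarrow> jet \<Rightarrow> real" where
  "rhsB n lam j J = (case J of (x, t, y, p) \<Rightarrow>
      2 * ux_fun n J * y j - 2 * (u_fun n J + 2 * lam j) * p j)"

definition Dx :: "nat \<Rightarrow> (nat \<Rightarrow> real) \<Rightarrow> (nat \<Rightarrow> real) \<Rightarrow> (jet \<Rightarrow> real) \<Rightarrow> jet \<Rightarrow> real" where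
  "Dx n lam alpha F J = (case J of (x, t, y, p) \<Rightarrow>
      pd_x F J + (\<Sum>k = 1..n. p k * pd_y k F J + rhsA n lam alpha k J * pd_p k F J))"

definition Dt :: "nat \<Rightarrow> (nat \<Rightarrow> real) \<Rightarrow> (nat \<Rightarrow> real) \<Rightarrow> (jet \<Rightarrow> real) \<Rightarrow> jet \<Rightarrow> real" where
  "Dt n lam alpha F J =
      pd_t F J + (\<Sum>k = 1..n. rhsB n lam k J * pd_y k F J
                     + Dx n lam alpha (rhsB n lam k) J * pd_p k F J)"

end

theory Submission
  imports Defs
begin

datatype dir = DX | DT | DY nat | DP nat

fun upd :: "dir \<Rightarrow> jet \<Rightarrow> real \<Rightarrow> jet" where
  "upd DX (x,t,y,p) s = (s,t,y,p)"
| "upd DT (x,t,y,p) s = (x,s,y,p)"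
| "upd (DY k) (x,t,y,p) s = (x,t,y(k:=s),p)"
| "upd (DP k) (x,t,y,p) s = (x,t,y,p(k:=s))"

fun coord :: "dir \<Rightarrow> jet \<Rightarrow> real" where
  "coord DX (x,t,y,p) = x"
| "coord DT (x,t,y,p) = t"
| "coord (DY k) (x,t,y,p) = y k"
| "coord (DP k) (x,t,y,p) = p k"

lemma upd_coord[simp]: "upd d J (coord d J) = J"
  by (cases J; cases d) auto

definition pd :: "dir \<Rightarrow> (jet \<Rightarrow> real) \<Rightarrow> jet \<Rightarrow> real" where
  "pd d F J = deriv (\<lambda>s. F (upd d J s)) (coord d J)"

definition dif :: "dir \<Rightarrow> (jet \<Rightarrow> real) \<Rightarrow> jet \<Rightarrow> bool" where
  "dif d F J \<longleftrightarrow> (\<lambda>s. F (upd d J s)) differentiable (at (coord d J))"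

definition good :: "(jet \<Rightarrow> real) \<Rightarrow> jet \<Rightarrow> bool" where
  "good F J \<longleftrightarrow> (\<forall>d. dif d F J)"

lemma dif_D: "dif d F J \<Longrightarrow> ((\<lambda>s. F (upd d J s)) has_real_derivative pd d F J) (at (coord d J))"
  unfolding dif_def pd_def using DERIV_deriv_iff_real_differentiable by blast

lemma pd_I: "((\<lambda>s. F (upd d J s)) has_real_derivative D) (at (coord d J)) \<Longrightarrow> pd d F J = D"
  unfolding pd_def by (rule DERIV_imp_deriv)

lemma dif_I: "((\<lambda>s. F (upd d J s)) has_real_derivative D) (at (coord d J)) \<Longrightarrow> dif d F J"
  unfolding dif_def using real_differentiable_def by blast

lemma pd_add: "dif d F J \<Longrightarrow> dif d G J \<Longrightarrow> pd d (\<lambda>J. F J + G J) J = pd d F J + pd d G J"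
  by (rule pd_I, rule DERIV_add[OF dif_D dif_D])
lemma dif_add: "dif d F J \<Longrightarrow> dif d G J \<Longrightarrow> dif d (\<lambda>J. F J + G J) J"
  by (rule dif_I, rule DERIV_add[OF dif_D dif_D])
lemma pd_diff: "dif d F J \<Longrightarrow> dif d G J \<Longrightarrow> pd d (\<lambda>J. F J - G J) J = pd d F J - pd d G J"
  by (rule pd_I, rule DERIV_diff[OF dif_D dif_D])
lemma dif_diff: "dif d F J \<Longrightarrow> dif d G J \<Longrightarrow> dif d (\<lambda>J. F J - G J) J"
  by (rule dif_I, rule DERIV_diff[OF dif_D dif_D])
lemma pd_mult: "dif d F J \<Longrightarrow> dif d G J \<Longrightarrow> pd d (\<lambda>J. F J * G J) J = pd d F J * G J + F J * pd d G J"
  by (rule pd_I, rule DERIV_cong, rule DERIV_mult[OF dif_D dif_D]) (auto simp: algebra_simps)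
lemma dif_mult: "dif d F J \<Longrightarrow> dif d G J \<Longrightarrow> dif d (\<lambda>J. F J * G J) J"
  by (rule dif_I, rule DERIV_mult[OF dif_D dif_D])
lemma pd_div: "dif d F J \<Longrightarrow> dif d G J \<Longrightarrow> G J \<noteq> 0 \<Longrightarrow>
   pd d (\<lambda>J. F J / G J) J = (pd d F J * G J - F J * pd d G J) / (G J)^2"
  apply (rule pd_I)
  apply (rule DERIV_cong, rule DERIV_divide[OF dif_D dif_D])
  apply (auto simp: power2_eq_square)
  done
lemma dif_div: "dif d F J \<Longrightarrow> dif d G J \<Longrightarrow> G J \<noteq> 0 \<Longrightarrow> dif d (\<lambda>J. F J / G J) J"
  by (rule dif_I, rule DERIV_divide[OF dif_D dif_D]) auto
lemma pd_const: "pd d (\<lambda>J. k) J = 0"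
  by (rule pd_I) (rule DERIV_const)
lemma dif_const: "dif d (\<lambda>J. k) J"
  by (rule dif_I) (rule DERIV_const)
lemma pd_sum: "finite K \<Longrightarrow> (\<forall>i\<in>K. dif d (F i) J) \<Longrightarrow> pd d (\<lambda>J. \<Sum>i\<in>K. F i J) J = (\<Sum>i\<in>K. pd d (F i) J)"
  by (rule pd_I, rule DERIV_sum, rule dif_D) auto
lemma dif_sum: "finite K \<Longrightarrow> (\<forall>i\<in>K. dif d (F i) J) \<Longrightarrow> dif d (\<lambda>J. \<Sum>i\<in>K. F i J) J"
  by (rule dif_I, rule DERIV_sum, rule dif_D) auto

definition jX :: "jet \<Rightarrow> real" where "jX J = fst J"
definition jT :: "jet \<Rightarrow> real" where "jT J = fst (snd J)"
definition jY :: "nat \<Rightarrow> jet \<Rightarrow> real" where "jY k J = fst (snd (snd J)) k"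
definition jP :: "nat \<Rightarrow> jet \<Rightarrow> real" where "jP k J = snd (snd (snd J)) k"

lemma jcoord[simp]: "jX (x,t,y,p) = x" "jT (x,t,y,p) = t" "jY k (x,t,y,p) = y k" "jP k (x,t,y,p) = p k"
  by (auto simp: jX_def jT_def jY_def jP_def)

lemma slice_jX: "jX (upd d J s) = (if d = DX then s else jX J)"
  by (cases J; cases d) auto
lemma slice_jT: "jT (upd d J s) = (if d = DT then s else jT J)"
  by (cases J; cases d) auto
lemma slice_jY: "jY k (upd d J s) = (if d = DY k then s else jY k J)"
  by (cases J; cases d) auto
lemma slice_jP: "jP k (upd d J s) = (if d = DP k then s else jP k J)"
  by (cases J; cases d) auto

lemma der_jX: "((\<lambda>s. jX (upd d J s)) has_real_derivative (if d = DX then 1 else 0)) (at (coord d J))"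
  by (unfold slice_jX, cases "d = DX") (auto intro!: derivative_eq_intros)
lemma pd_jX: "pd d (jX) J = (if d = DX then 1 else 0)"
  by (rule pd_I[OF der_jX])
lemma dif_jX: "dif d (jX) J"
  by (rule dif_I[OF der_jX])
lemma der_jT: "((\<lambda>s. jT (upd d J s)) has_real_derivative (if d = DT then 1 else 0)) (at (coord d J))"
  by (unfold slice_jT, cases "d = DT") (auto intro!: derivative_eq_intros)
lemma pd_jT: "pd d (jT) J = (if d = DT then 1 else 0)"
  by (rule pd_I[OF der_jT])
lemma dif_jT: "dif d (jT) J"
  by (rule dif_I[OF der_jT])
lemma der_jY: "((\<lambda>s. jY k (upd d J s)) has_real_derivative (if d = DY k then 1 else 0)) (at (coord d J))"
  by (unfold slice_jY, cases "d = DY k") (auto intro!: derivative_eq_intros)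
lemma pd_jY: "pd d (jY k) J = (if d = DY k then 1 else 0)"
  by (rule pd_I[OF der_jY])
lemma dif_jY: "dif d (jY k) J"
  by (rule dif_I[OF der_jY])
lemma der_jP: "((\<lambda>s. jP k (upd d J s)) has_real_derivative (if d = DP k then 1 else 0)) (at (coord d J))"
  by (unfold slice_jP, cases "d = DP k") (auto intro!: derivative_eq_intros)
lemma pd_jP: "pd d (jP k) J = (if d = DP k then 1 else 0)"
  by (rule pd_I[OF der_jP])
lemma dif_jP: "dif d (jP k) J"
  by (rule dif_I[OF der_jP])


lemmas pd_simps = pd_jX pd_jT pd_jY pd_jP pd_const
lemmas dif_simps = dif_jX dif_jT dif_jY dif_jP dif_const

lemma good_add[simp]: "good F J \<Longrightarrow> good G J \<Longrightarrow> good (\<lambda>J. F J + G J) J"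
  by (simp add: good_def dif_add)
lemma good_diff[simp]: "good F J \<Longrightarrow> good G J \<Longrightarrow> good (\<lambda>J. F J - G J) J"
  by (simp add: good_def dif_diff)
lemma good_mult[simp]: "good F J \<Longrightarrow> good G J \<Longrightarrow> good (\<lambda>J. F J * G J) J"
  by (simp add: good_def dif_mult)
lemma good_div[simp]: "good F J \<Longrightarrow> good G J \<Longrightarrow> G J \<noteq> 0 \<Longrightarrow> good (\<lambda>J. F J / G J) J"
  by (simp add: good_def dif_div)
lemma good_const[simp]: "good (\<lambda>J. k) J"
  by (simp add: good_def dif_const)
lemma good_sum[simp]: "finite K \<Longrightarrow> (\<forall>i\<in>K. good (F i) J) \<Longrightarrow> good (\<lambda>J. \<Sum>i\<in>K. F i J) J"
  by (simp add: good_def dif_sum)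
lemma good_coords[simp]: "good jX J" "good jT J" "good (jY k) J" "good (jP k) J"
  by (simp_all add: good_def dif_simps)

definition V :: "nat \<Rightarrow> real \<Rightarrow> real \<Rightarrow> (nat\<Rightarrow>real) \<Rightarrow> (nat\<Rightarrow>real) \<Rightarrow> (jet\<Rightarrow>real) \<Rightarrow> jet \<Rightarrow> real" where
 "V n a b c e F J = a * pd DX F J + b * pd DT F J + (\<Sum>k=1..n. c k * pd (DY k) F J + e k * pd (DP k) F J)"

lemma V_lin: "(\<And>d. pd d H J = \<alpha> * pd d F J + \<beta> * pd d G J) \<Longrightarrow>
   V n a b c e H J = \<alpha> * V n a b c e F J + \<beta> * V n a b c e G J"
  by (simp add: V_def sum_distrib_left sum.distrib algebra_simps)

lemma V_add[simp]: "good F J \<Longrightarrow> good G J \<Longrightarrow> V n a b c e (\<lambda>J. F J + G J) J = V n a b c e F J + V n a b c e G J"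
  using V_lin[of "\<lambda>J. F J + G J" J 1 F 1 G] by (simp add: good_def pd_add)
lemma V_diff[simp]: "good F J \<Longrightarrow> good G J \<Longrightarrow> V n a b c e (\<lambda>J. F J - G J) J = V n a b c e F J - V n a b c e G J"
  using V_lin[of "\<lambda>J. F J - G J" J 1 F "-1" G] by (simp add: good_def pd_diff)
lemma V_mult[simp]: "good F J \<Longrightarrow> good G J \<Longrightarrow> V n a b c e (\<lambda>J. F J * G J) J = V n a b c e F J * G J + F J * V n a b c e G J"
  using V_lin[of "\<lambda>J. F J * G J" J "G J" F "F J" G] by (simp add: good_def pd_mult algebra_simps)
lemma V_div[simp]: "good F J \<Longrightarrow> good G J \<Longrightarrow> G J \<noteq> 0 \<Longrightarrow>
   V n a b c e (\<lambda>J. F J / G J) J = (V n a b c e F J * G J - F J * V n a b c e G J) / (G J)^2"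
  using V_lin[of "\<lambda>J. F J / G J" J "1 / G J" F "- F J / (G J)^2" G]
  by (simp add: good_def pd_div field_simps power2_eq_square)
lemma V_const[simp]: "V n a b c e (\<lambda>J. k) J = 0"
  by (simp add: V_def pd_const)
lemma V_sum[simp]: "finite K \<Longrightarrow> (\<forall>i\<in>K. good (F i) J) \<Longrightarrow>
   V n a b c e (\<lambda>J. \<Sum>i\<in>K. F i J) J = (\<Sum>i\<in>K. V n a b c e (F i) J)"
  apply (simp add: V_def good_def pd_sum sum_distrib_left sum.distrib)
  apply (subst (1 2) sum.swap)
  apply simp
  done
lemma mult_delta: "(f i * (if i = k then 1 else 0) :: real) = (if i = k then f k else 0)"
  by simp
lemma V_jX[simp]: "V n a b c e jX J = a"
  by (simp add: V_def pd_simps)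
lemma V_jT[simp]: "V n a b c e jT J = b"
  by (simp add: V_def pd_simps)
lemma V_jY[simp]: "k \<in> {1..n} \<Longrightarrow> V n a b c e (jY k) J = c k"
  by (simp add: V_def pd_simps mult_delta)
lemma V_jP[simp]: "k \<in> {1..n} \<Longrightarrow> V n a b c e (jP k) J = e k"
  by (simp add: V_def pd_simps mult_delta)

definition inD :: "nat \<Rightarrow> jet \<Rightarrow> bool" where
  "inD n J \<longleftrightarrow> jT J \<noteq> 0 \<and> (\<forall>k\<in>{1..n}. jY k J \<noteq> 0)"

lemma pd_cong:
  assumes "inD n J" "\<And>J'. inD n J' \<Longrightarrow> F J' = G J'"
    and "d = DX \<or> d = DT \<or> (\<exists>k\<in>{1..n}. d = DY k) \<or> (\<exists>k. d = DP k)"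
  shows "pd d F J = pd d G J"
proof -
  obtain x t y p where J: "J = (x,t,y,p)" by (cases J) auto
  have ev: "eventually (\<lambda>s. inD n (upd d J s)) (nhds (coord d J))"
    using assms(3)
  proof (elim disjE bexE exE)
    assume "d = DX" then show ?thesis using assms(1) by (simp add: J inD_def)
  next
    assume "d = DT" then show ?thesis using assms(1) J
      by (simp add: inD_def) (metis (mono_tags, lifting) eventually_mono t1_space_nhds)
  next
    fix k assume k: "k \<in> {1..n}" "d = DY k"
    have "eventually (\<lambda>s. s \<noteq> 0) (nhds (y k))"
      using assms(1) k J by (intro t1_space_nhds) (simp add: inD_def)
    then show ?thesis using assms(1) k J
      by (auto simp: inD_def elim!: eventually_mono)
  next
    fix k assume "d = DP k" then show ?thesis using assms(1) by (simp add: J inD_def)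
  qed
  show ?thesis unfolding pd_def
    by (rule deriv_cong_ev[OF _ refl]) (rule eventually_mono[OF ev], rule assms(2))
qed

lemma V_cong:
  assumes "inD n J" "\<And>J'. inD n J' \<Longrightarrow> F J' = G J'"
  shows "V n a b c e F J = V n a b c e G J"
  unfolding V_def using pd_cong[OF assms] by auto


lemma u_eq: "u_fun n = (\<lambda>J. jX J / (6 * jT J) + (\<Sum>k=1..n. jY k J) / (3 * jT J))"
  by (rule ext, case_tac J) (simp add: u_fun_def)
lemma ux_eq: "ux_fun n = (\<lambda>J. 1 / (6 * jT J) + (\<Sum>k=1..n. jP k J) / (3 * jT J))"
  by (rule ext, case_tac J) (simp add: ux_fun_def)
lemma A_eq: "rhsA n lam alpha j = (\<lambda>J. (jP j J * jP j J - alpha j * alpha j) / (2 * jY j J) + 2 * (u_fun n J - lam j) * jY j J)"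
  by (rule ext, case_tac J) (simp add: rhsA_def power2_eq_square)
lemma B_eq: "rhsB n lam j = (\<lambda>J. 2 * ux_fun n J * jY j J - 2 * (u_fun n J + 2 * lam j) * jP j J)"
  by (rule ext, case_tac J) (simp add: rhsB_def)

lemma good_u[simp]: "jT J \<noteq> 0 \<Longrightarrow> good (u_fun n) J"
  by (simp add: u_eq)
lemma good_ux[simp]: "jT J \<noteq> 0 \<Longrightarrow> good (ux_fun n) J"
  by (simp add: ux_eq)
lemma good_A[simp]: "jT J \<noteq> 0 \<Longrightarrow> jY j J \<noteq> 0 \<Longrightarrow> good (rhsA n lam alpha j) J"
  by (simp add: A_eq)
lemma good_B[simp]: "jT J \<noteq> 0 \<Longrightarrow> good (rhsB n lam j) J"
  by (simp add: B_eq)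

lemma V_u: "t \<noteq> 0 \<Longrightarrow> V n a b c e (u_fun n) (x,t,y,p) =
   a / (6*t) - b * (x / (6*t^2) + (\<Sum>k=1..n. y k) / (3*t^2)) + (\<Sum>k=1..n. c k) / (3*t)"
  by (simp add: u_eq) (simp add: field_simps power2_eq_square)

lemma V_ux: "t \<noteq> 0 \<Longrightarrow> V n a b c e (ux_fun n) (x,t,y,p) =
   - b * (1 / (6*t^2) + (\<Sum>k=1..n. p k) / (3*t^2)) + (\<Sum>k=1..n. e k) / (3*t)"
  by (simp add: ux_eq) (simp add: field_simps power2_eq_square)


lemma V_A: "t \<noteq> 0 \<Longrightarrow> y j \<noteq> 0 \<Longrightarrow> j \<in> {1..n} \<Longrightarrow> V n a b c e (rhsA n lam alpha j) (x,t,y,p) =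
   (p j / y j) * e j + (2 * (u_fun n (x,t,y,p) - lam j) - (p j * p j - alpha j * alpha j) / (2 * y j * y j)) * c j
   + 2 * y j * V n a b c e (u_fun n) (x,t,y,p)"
  by (simp add: A_eq) (simp add: field_simps power2_eq_square)

lemma V_B: "t \<noteq> 0 \<Longrightarrow> j \<in> {1..n} \<Longrightarrow> V n a b c e (rhsB n lam j) (x,t,y,p) =
   2 * V n a b c e (ux_fun n) (x,t,y,p) * y j + 2 * ux_fun n (x,t,y,p) * c j
   - 2 * V n a b c e (u_fun n) (x,t,y,p) * p j - 2 * (u_fun n (x,t,y,p) + 2 * lam j) * e j"
  by (simp add: B_eq)

definition U2f :: "nat \<Rightarrow> (nat \<Rightarrow> real) \<Rightarrow> (nat \<Rightarrow> real) \<Rightarrow> jet \<Rightarrow> real" where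
  "U2f n lam alpha = (\<lambda>J. (\<Sum>k=1..n. rhsA n lam alpha k J) / (3 * jT J))"

definition Gf :: "nat \<Rightarrow> (nat \<Rightarrow> real) \<Rightarrow> (nat \<Rightarrow> real) \<Rightarrow> nat \<Rightarrow> jet \<Rightarrow> real" where
  "Gf n lam alpha j = (\<lambda>J. 2 * U2f n lam alpha J * jY j J - 2 * (u_fun n J + 2 * lam j) * rhsA n lam alpha j J)"

lemma good_U2[simp]: "inD n J \<Longrightarrow> good (U2f n lam alpha) J"
  by (simp add: U2f_def inD_def)

lemma V_U2: "t \<noteq> 0 \<Longrightarrow> (\<forall>k\<in>{1..n}. y k \<noteq> 0) \<Longrightarrow> V n a b c e (U2f n lam alpha) (x,t,y,p) =
   (\<Sum>k=1..n. V n a b c e (rhsA n lam alpha k) (x,t,y,p)) / (3*t) - b * (\<Sum>k=1..n. rhsA n lam alpha k (x,t,y,p)) / (3 * t^2)"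
  by (simp add: U2f_def) (simp add: field_simps power2_eq_square)

lemma V_G: "t \<noteq> 0 \<Longrightarrow> (\<forall>k\<in>{1..n}. y k \<noteq> 0) \<Longrightarrow> j \<in> {1..n} \<Longrightarrow> V n a b c e (Gf n lam alpha j) (x,t,y,p) =
   2 * V n a b c e (U2f n lam alpha) (x,t,y,p) * y j + 2 * U2f n lam alpha (x,t,y,p) * c j
   - 2 * V n a b c e (u_fun n) (x,t,y,p) * rhsA n lam alpha j (x,t,y,p)
   - 2 * (u_fun n (x,t,y,p) + 2 * lam j) * V n a b c e (rhsA n lam alpha j) (x,t,y,p)"
proof -
  assume a: "t \<noteq> 0" "\<forall>k\<in>{1..n}. y k \<noteq> 0" "j \<in> {1..n}"
  then have "inD n (x,t,y,p)" by (simp add: inD_def)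
  then show ?thesis using a by (simp add: Gf_def del: good_U2) (simp add: algebra_simps)
qed

lemma Dx_V: "Dx n lam alpha F (x,t,y,p) = V n 1 0 p (\<lambda>k. rhsA n lam alpha k (x,t,y,p)) F (x,t,y,p)"
  by (simp add: Dx_def V_def pd_x_def pd_y_def pd_p_def pd_def)

lemma Dt_V: "Dt n lam alpha F (x,t,y,p) = V n 0 1 (\<lambda>k. rhsB n lam k (x,t,y,p)) (\<lambda>k. Dx n lam alpha (rhsB n lam k) (x,t,y,p)) F (x,t,y,p)"
  by (simp add: Dt_def V_def pd_t_def pd_y_def pd_p_def pd_def)


lemma L1: "inD n (x,t,y,p) \<Longrightarrow> V n 1 0 p (\<lambda>k. rhsA n lam alpha k (x,t,y,p)) (u_fun n) (x,t,y,p) = ux_fun n (x,t,y,p)"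
  by (simp add: inD_def V_u ux_fun_def)
lemma L2: "inD n (x,t,y,p) \<Longrightarrow> V n 1 0 p (\<lambda>k. rhsA n lam alpha k (x,t,y,p)) (ux_fun n) (x,t,y,p) = U2f n lam alpha (x,t,y,p)"
  by (simp add: inD_def V_ux U2f_def)
lemma L3: "inD n (x,t,y,p) \<Longrightarrow> j \<in> {1..n} \<Longrightarrow> Dx n lam alpha (rhsB n lam j) (x,t,y,p) = Gf n lam alpha j (x,t,y,p)"
  unfolding Dx_V using L1[of n x t y p lam alpha] L2[of n x t y p lam alpha]
  by (simp add: inD_def V_B Gf_def algebra_simps)

lemma L1': "inD n J \<Longrightarrow> Dx n lam alpha (u_fun n) J = ux_fun n J"
  by (cases J) (simp add: Dx_V L1)
lemma L2': "inD n J \<Longrightarrow> Dx n lam alpha (ux_fun n) J = U2f n lam alpha J"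
  by (cases J) (simp add: Dx_V L2)
lemma L3': "inD n J \<Longrightarrow> j \<in> {1..n} \<Longrightarrow> Dx n lam alpha (rhsB n lam j) J = Gf n lam alpha j J"
  by (cases J) (simp add: L3)

lemma L4: "inD n (x,t,y,p) \<Longrightarrow> k \<in> {1..n} \<Longrightarrow> V n 1 0 p (\<lambda>k. rhsA n lam alpha k (x,t,y,p)) (rhsA n lam alpha k) (x,t,y,p)
   = 4 * (u_fun n (x,t,y,p) - lam k) * p k + 2 * y k * ux_fun n (x,t,y,p)"
  apply (subst V_A)
  apply (auto simp: inD_def L1)[3]
  apply (simp add: L1)
  apply (simp add: rhsA_def field_simps power2_eq_square inD_def)
  done


theorem proposition1:
  fixes n :: nat and lam alpha :: "nat \<Rightarrow> real"
  assumes "n \<ge> 1"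
    and "inj_on lam {1..n}"
  shows "\<forall>x t y p. t \<noteq> 0 \<and> (\<forall>k\<in>{1..n}. y k \<noteq> 0) \<longrightarrow>
           (\<forall>j\<in>{1..n}.
              Dt n lam alpha (rhsA n lam alpha j) (x, t, y, p)
                = Dx n lam alpha (Dx n lam alpha (rhsB n lam j)) (x, t, y, p))
         \<and> Dt n lam alpha (u_fun n) (x, t, y, p)
             = Dx n lam alpha (Dx n lam alpha (Dx n lam alpha (u_fun n))) (x, t, y, p)
               - 6 * u_fun n (x, t, y, p) * Dx n lam alpha (u_fun n) (x, t, y, p)"
proof (intro allI impI)
  fix x t :: real and y p :: "nat \<Rightarrow> real"
  assume h: "t \<noteq> 0 \<and> (\<forall>k\<in>{1..n}. y k \<noteq> 0)"
  define J where "J = (x,t,y,p)"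
  have t0: "t \<noteq> 0" and y0: "\<forall>k\<in>{1..n}. y k \<noteq> 0" using h by auto
  have hD: "inD n (x,t,y,p)" using h by (simp add: inD_def)
  define u where "u = u_fun n (x,t,y,p)"
  define ux where "ux = ux_fun n (x,t,y,p)"
  define A where "A = (\<lambda>k. rhsA n lam alpha k (x,t,y,p))"
  define B where "B = (\<lambda>k. rhsB n lam k (x,t,y,p))"
  define U2 where "U2 = U2f n lam alpha (x,t,y,p)"
  define DxA where "DxA = (\<lambda>k. 4 * (u - lam k) * p k + 2 * y k * ux)"
  define DxU2 where "DxU2 = (\<Sum>k=1..n. DxA k) / (3*t)"
  define Dtu where "Dtu = - (x / (6*t^2) + (\<Sum>k=1..n. y k) / (3*t^2)) + (\<Sum>k=1..n. B k) / (3*t)"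
  have u_def': "u = x / (6 * t) + (\<Sum>k = 1..n. y k) / (3 * t)" by (simp add: u_def u_fun_def)
  have ux_def': "ux = 1 / (6 * t) + (\<Sum>k = 1..n. p k) / (3 * t)" by (simp add: ux_def ux_fun_def)
  have Dtu_eq: "Dt n lam alpha (u_fun n) (x,t,y,p) = Dtu"
    by (simp add: Dt_V V_u t0 Dtu_def B_def)
  have DxA_eq: "\<And>k. k \<in> {1..n} \<Longrightarrow> V n 1 0 p A (rhsA n lam alpha k) (x,t,y,p) = DxA k"
    using L4[OF hD] by (simp add: A_def DxA_def u_def ux_def)
  have DDu: "\<And>J'. inD n J' \<Longrightarrow> Dx n lam alpha (Dx n lam alpha (u_fun n)) J' = U2f n lam alpha J'"
  proof -
    fix J' assume "inD n J'"
    then show "Dx n lam alpha (Dx n lam alpha (u_fun n)) J' = U2f n lam alpha J'"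
      apply (cases J')
      apply (simp only: Dx_V)
      apply (subst V_cong[where G="ux_fun n"])
        apply assumption
       apply (simp add: L1' flip: Dx_V)
      apply (simp add: L2 del: V_div V_add V_diff V_mult)
      done
  qed
  have DxU2_eq: "Dx n lam alpha (Dx n lam alpha (Dx n lam alpha (u_fun n))) (x,t,y,p) = DxU2"
    apply (simp only: Dx_V)
    apply (subst V_cong[OF hD, where G="U2f n lam alpha"])
     apply (simp add: DDu flip: Dx_V)
    apply (simp add: V_U2 t0 y0 DxU2_def flip: A_def cong: sum.cong)
    apply (rule sum.cong, simp_all add: DxA_eq)
    done
  have Dxu_eq: "Dx n lam alpha (u_fun n) (x,t,y,p) = ux"
    using L1'[OF hD] by (simp add: ux_def)
  have sumdiff: "(\<Sum>k=1..n. B k) - (\<Sum>k=1..n. DxA k) = - 6 * u * (\<Sum>k=1..n. p k)"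
  proof -
    have "(\<Sum>k=1..n. B k) - (\<Sum>k=1..n. DxA k) = (\<Sum>k=1..n. B k - DxA k)"
      by (simp add: sum_subtractf)
    also have "\<dots> = (\<Sum>k=1..n. (- 6 * u) * p k)"
      by (rule sum.cong) (simp_all add: B_def DxA_def rhsB_def u_def ux_def algebra_simps)
    finally show ?thesis by (simp add: sum_distrib_left)
  qed
  have kdv: "Dtu = DxU2 - 6 * u * ux"
    unfolding Dtu_def DxU2_def ux_def'
    using sumdiff t0 unfolding u_def'
    apply (simp add: field_simps power2_eq_square)
    apply (drule arg_cong[where f="\<lambda>z. 12*t*t*z"])
    apply (simp add: algebra_simps)
    done
  show "(\<forall>j\<in>{1..n}.
              Dt n lam alpha (rhsA n lam alpha j) (x, t, y, p)
                = Dx n lam alpha (Dx n lam alpha (rhsB n lam j)) (x, t, y, p))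
         \<and> Dt n lam alpha (u_fun n) (x, t, y, p)
             = Dx n lam alpha (Dx n lam alpha (Dx n lam alpha (u_fun n))) (x, t, y, p)
               - 6 * u_fun n (x, t, y, p) * Dx n lam alpha (u_fun n) (x, t, y, p)"
  proof
    show "Dt n lam alpha (u_fun n) (x, t, y, p)
             = Dx n lam alpha (Dx n lam alpha (Dx n lam alpha (u_fun n))) (x, t, y, p)
               - 6 * u_fun n (x, t, y, p) * Dx n lam alpha (u_fun n) (x, t, y, p)"
      using Dtu_eq DxU2_eq Dxu_eq kdv by (simp add: u_def)
  next
    show "\<forall>j\<in>{1..n}. Dt n lam alpha (rhsA n lam alpha j) (x, t, y, p)
                = Dx n lam alpha (Dx n lam alpha (rhsB n lam j)) (x, t, y, p)"
    proof
      fix j assume j: "j \<in> {1..n}"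
      have yj: "y j \<noteq> 0" using y0 j by auto
      have G: "Gf n lam alpha j (x,t,y,p) = 2 * U2 * y j - 2 * (u + 2 * lam j) * A j"
        by (simp add: Gf_def U2_def u_def A_def)
      have lhs: "Dt n lam alpha (rhsA n lam alpha j) (x, t, y, p)
         = (p j / y j) * (2 * U2 * y j - 2 * (u + 2 * lam j) * A j)
           + (2 * (u - lam j) - (p j * p j - alpha j * alpha j) / (2 * y j * y j)) * B j + 2 * y j * Dtu"
        apply (simp only: Dt_V)
        apply (subst V_A[where y=y and j=j, OF t0 yj j])
        apply (simp only: flip: Dt_V)
        apply (simp add: Dtu_eq L3[OF hD j] G B_def u_def)
        done
      have VU2: "V n 1 0 p A (U2f n lam alpha) (x,t,y,p) = DxU2"
        apply (simp add: V_U2 t0 y0 DxU2_def flip: A_def cong: sum.cong)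
        apply (rule sum.cong, simp_all add: DxA_eq)
        done
      have rhs: "Dx n lam alpha (Dx n lam alpha (rhsB n lam j)) (x, t, y, p)
         = 2 * DxU2 * y j + 2 * U2 * p j - 2 * ux * A j - 2 * (u + 2 * lam j) * DxA j"
        apply (simp only: Dx_V)
        apply (subst V_cong[OF hD, where G="Gf n lam alpha j"])
         apply (erule L3'[OF _ j])
        apply (subst V_G[OF t0 y0 j])
        apply (simp only: flip: A_def)
        apply (simp add: VU2[unfolded A_def] DxA_eq[OF j, unfolded A_def] U2_def u_def A_def L1[OF hD] ux_def)
        done
      have Aj: "A j = (p j * p j - alpha j * alpha j) / (2 * y j) + 2 * (u - lam j) * y j"
        by (simp add: A_def u_def rhsA_def power2_eq_square)
      have Bj: "B j = 2 * ux * y j - 2 * (u + 2 * lam j) * p j"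
        by (simp add: B_def u_def ux_def rhsB_def)
      show "Dt n lam alpha (rhsA n lam alpha j) (x, t, y, p)
                = Dx n lam alpha (Dx n lam alpha (rhsB n lam j)) (x, t, y, p)"
        unfolding lhs rhs kdv Aj Bj DxA_def using yj
        by (simp add: field_simps)
    qed
  qed
qed

end
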